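(* Let $M,\Xi\in\mathbb{R}^{\ell\times\ell}$ be symmetric positive semidefinite, suppose $\operatorname{range}(M)=\mathbb{R}^J:=\operatorname{span}\{e_i:i\in J\}$ for some $J\subseteq\{1,\dots,\ell\}$, $\|\Xi\|_{op}\le\lambda_{\min}(M_{(J)})/2$, and $M+\Xi$ is invertible. Then for $x\in\operatorname{range}(M)$, \[ \big|x^\top(M+\Xi)^{-1}x-x_{(J)}^\top M_{(J)}^{-1}x_{(J)}\big|\le2\|M_{(J)}^{-1}\|_{op}^2\,\|\Xi\|_{op}\,\|x\|^2, \] while for $x\notin\operatorname{range}(M)$, \[ x^\top(M+\Xi)^{-1}x\ge\frac{1}{2\|\Xi\|_{op}}\|x_{(J^c)}\|^2 . \]
   Context: For a vector $x$ and index set $J$, $x_{(J)}$ is the restriction of $x$ to the coordinates in $J$; for a matrix $M$, $M_{(J)}$ is the principal submatrix on $J\times J$; $J^c$ is the complement of $J$; $\lambda_{\min}$ denotes the smallest eigenvalue. *)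

theory Defs
  imports Complex_Main "Jordan_Normal_Form.DL_Submatrix" "Jordan_Normal_Form.Char_Poly"
begin

definition sym_psd :: "nat \<Rightarrow> real mat \<Rightarrow> bool" where
  "sym_psd n A \<longleftrightarrow> A \<in> carrier_mat n n \<and> transpose_mat A = A \<and>
     (\<forall>v \<in> carrier_vec n. 0 \<le> v \<bullet> (A *\<^sub>v v))"

definition vnorm :: "real vec \<Rightarrow> real" where
  "vnorm v = sqrt (v \<bullet> v)"

definition op_norm :: "real mat \<Rightarrow> real" where
  "op_norm A = Sup {vnorm (A *\<^sub>v v) | v. v \<in> carrier_vec (dim_col A) \<and> vnorm v \<le> 1}"

definition lambda_min :: "real mat \<Rightarrow> real" where
  "lambda_min A = Min {k. eigenvalue A k}"

definition mat_inv :: "real mat \<Rightarrow> real mat" where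
  "mat_inv A = (SOME B. B \<in> carrier_mat (dim_row A) (dim_row A) \<and>
       A * B = 1\<^sub>m (dim_row A) \<and> B * A = 1\<^sub>m (dim_row A))"

definition mat_range :: "real mat \<Rightarrow> real vec set" where
  "mat_range A = {A *\<^sub>v y | y. y \<in> carrier_vec (dim_col A)}"

definition coord_subspace :: "nat \<Rightarrow> nat set \<Rightarrow> real vec set" where
  "coord_subspace n J = {x \<in> carrier_vec n. \<forall>i<n. i \<notin> J \<longrightarrow> x $ i = 0}"

(* restriction x_(J) of x to coordinates in J (in increasing order), matching submatrix *)
definition restrict_vec :: "real vec \<Rightarrow> nat set \<Rightarrow> real vec" where
  "restrict_vec x J = vec (card {i. i < dim_vec x \<and> i \<in> J}) (\<lambda>i. x $ pick J i)"

end

theory Submission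
  imports Defs
begin

lemma pick_bij:
  assumes "finite S"
  shows "bij_betw (pick S) {..<card S} S"
proof (rule bij_betw_byWitness[where f'="\<lambda>i. card {a\<in>S. a < i}"])
  show "\<forall>a\<in>{..<card S}. card {b \<in> S. b < pick S a} = a" using card_pick_le by auto
  show "\<forall>a'\<in>S. pick S (card {a \<in> S. a < a'}) = a'" using pick_card_in_set by auto
  show "pick S ` {..<card S} \<subseteq> S" using pick_in_set_le by auto
  show "(\<lambda>i. card {a \<in> S. a < i}) ` S \<subseteq> {..<card S}"
  proof
    fix k assume "k \<in> (\<lambda>i. card {a \<in> S. a < i}) ` S"
    then obtain i where i: "i \<in> S" "k = card {a \<in> S. a < i}" by auto
    have "{a \<in> S. a < i} \<subset> S" using i by auto
    then have "card {a \<in> S. a < i} < card S" using assms by (simp add: psubset_card_mono)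
    then show "k \<in> {..<card S}" using i by auto
  qed
qed

lemma card_restr: "S \<subseteq> {..<n} \<Longrightarrow> card {i. i < n \<and> i \<in> S} = card S"
  by (metis (no_types, lifting) Collect_cong lessThan_iff subset_eq Collect_mem_eq)

lemma sum_pick:
  assumes "S \<subseteq> {..<n}"
  shows "(\<Sum>k\<in>{0..<card S}. f (pick S k)) = (\<Sum>i\<in>S. f i)"
proof -
  have "finite S" using assms finite_subset by blast
  from pick_bij[OF this] have "bij_betw (pick S) {0..<card S} S" by (simp add: lessThan_atLeast0)
  then show ?thesis by (rule sum.reindex_bij_betw)
qed

lemma sum_to_S:
  fixes n :: nat
  assumes "S \<subseteq> {..<n}" and "\<And>i. i < n \<Longrightarrow> i \<notin> S \<Longrightarrow> f i = 0"
  shows "(\<Sum>i\<in>{0..<n}. f i) = (\<Sum>i\<in>S. f i)"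
  using assms by (intro sum.mono_neutral_right) auto

lemma dim_restrict: "S \<subseteq> {..<n} \<Longrightarrow> x \<in> carrier_vec n \<Longrightarrow> restrict_vec x S \<in> carrier_vec (card S)"
  unfolding restrict_vec_def using card_restr by auto

lemma restrict_dot:
  assumes "S \<subseteq> {..<n}" "x \<in> carrier_vec n" "y \<in> carrier_vec n"
  shows "restrict_vec x S \<bullet> restrict_vec y S = (\<Sum>i\<in>S. x$i * y$i)"
proof -
  have "restrict_vec x S \<bullet> restrict_vec y S = (\<Sum>k\<in>{0..<card S}. x $ pick S k * y $ pick S k)"
    unfolding scalar_prod_def restrict_vec_def using assms card_restr[OF assms(1)] by auto
  also have "\<dots> = (\<Sum>i\<in>S. x$i * y$i)" by (rule sum_pick[OF assms(1)])
  finally show ?thesis .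
qed

lemma dot_sum: "y \<in> carrier_vec n \<Longrightarrow> x \<bullet> y = (\<Sum>i\<in>{0..<n}. x$i * y$i)"
  unfolding scalar_prod_def by auto

definition extv :: "nat \<Rightarrow> nat set \<Rightarrow> real vec \<Rightarrow> real vec" where
  "extv n J a = vec n (\<lambda>i. if i \<in> J then a $ card {b\<in>J. b < i} else 0)"

lemma extv_carrier[simp]: "extv n J a \<in> carrier_vec n" unfolding extv_def by auto

lemma extv_sub: "extv n J a \<in> coord_subspace n J"
  unfolding extv_def coord_subspace_def by auto

lemma restrict_extv:
  assumes "J \<subseteq> {..<n}" "a \<in> carrier_vec (card J)"
  shows "restrict_vec (extv n J a) J = a"
proof (rule eq_vecI)
  show "dim_vec (restrict_vec (extv n J a) J) = dim_vec a"
    using assms card_restr[OF assms(1)] unfolding restrict_vec_def extv_def by auto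
  fix i assume "i < dim_vec a"
  then have i: "i < card J" using assms by auto
  then have p: "pick J i \<in> J" by (rule pick_in_set_le)
  then have "pick J i < n" using assms by auto
  then show "restrict_vec (extv n J a) J $ i = a $ i"
    unfolding restrict_vec_def extv_def using card_restr[OF assms(1)] i p card_pick_le[OF i] by auto
qed

lemma extv_restrict:
  assumes "J \<subseteq> {..<n}" "x \<in> coord_subspace n J"
  shows "extv n J (restrict_vec x J) = x"
proof (rule eq_vecI)
  have x: "x \<in> carrier_vec n" using assms unfolding coord_subspace_def by auto
  show "dim_vec (extv n J (restrict_vec x J)) = dim_vec x" using x by (simp add: extv_def)
  fix i assume "i < dim_vec x"
  then have i: "i < n" using x by auto
  show "extv n J (restrict_vec x J) $ i = x $ i"
  proof (cases "i \<in> J")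
    case True
    have "{a \<in> J. a < i} \<subset> J" using True by auto
    then have "card {a \<in> J. a < i} < card J" using assms finite_subset[OF assms(1)] by (simp add: psubset_card_mono)
    then show ?thesis unfolding extv_def restrict_vec_def using True i x card_restr[OF assms(1)] pick_card_in_set[OF True] by auto
  next
    case False
    then show ?thesis using assms i unfolding extv_def coord_subspace_def by auto
  qed
qed

lemma CS_sq:
  fixes u v :: "real vec"
  assumes "u \<in> carrier_vec n" "v \<in> carrier_vec n"
  shows "(u \<bullet> v)^2 \<le> (u \<bullet> u) * (v \<bullet> v)"
proof -
  define a where "a = (\<Sum>i\<in>{0..<n}. u$i * u$i)"
  define b where "b = (\<Sum>i\<in>{0..<n}. u$i * v$i)"
  define c where "c = (\<Sum>i\<in>{0..<n}. v$i * v$i)"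
  have q: "0 \<le> a - 2*t*b + t^2 * c" for t
  proof -
    have "0 \<le> (\<Sum>i\<in>{0..<n}. (u$i - t * v$i)^2)" by (intro sum_nonneg) auto
    also have "\<dots> = a - 2*t*b + t^2 * c" unfolding a_def b_def c_def
      by (simp add: power2_eq_square algebra_simps sum.distrib sum_distrib_left sum_subtractf)
    finally show ?thesis .
  qed
  have c0: "c \<ge> 0" unfolding c_def by (intro sum_nonneg) auto
  have "b^2 \<le> a * c"
  proof (cases "c = 0")
    case True
    have "b = 0"
    proof (rule ccontr)
      assume "b \<noteq> 0"
      have "0 \<le> a - 2*((a+1)/(2*b))*b" using q[of "(a+1)/(2*b)"] True by simp
      then show False using \<open>b \<noteq> 0\<close> by (simp add: field_simps)
    qed
    then show ?thesis using True by simp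
  next
    case False
    then have cp: "c > 0" using c0 by auto
    have "0 \<le> a - 2*(b/c)*b + (b/c)^2 * c" by (rule q)
    also have "\<dots> = a - b^2/c" using cp by (simp add: field_simps power2_eq_square)
    finally show ?thesis using cp by (simp add: field_simps)
  qed
  moreover have "u \<bullet> v = b" "u \<bullet> u = a" "v \<bullet> v = c" using assms unfolding a_def b_def c_def
    by (auto simp: dot_sum)
  ultimately show ?thesis by simp
qed

lemma dot_self_nonneg: "(v::real vec) \<bullet> v \<ge> 0"
  unfolding scalar_prod_def by (intro sum_nonneg) auto

lemma CS:
  fixes u v :: "real vec"
  assumes "u \<in> carrier_vec n" "v \<in> carrier_vec n"
  shows "\<bar>u \<bullet> v\<bar> \<le> vnorm u * vnorm v"
proof -
  have "\<bar>u \<bullet> v\<bar> = sqrt ((u \<bullet> v)^2)" by simp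
  also have "\<dots> \<le> sqrt ((u \<bullet> u) * (v \<bullet> v))" using CS_sq[OF assms] real_sqrt_le_mono by blast
  also have "\<dots> = vnorm u * vnorm v" unfolding vnorm_def by (simp add: real_sqrt_mult)
  finally show ?thesis .
qed


lemma vnorm_smult: "vnorm (c \<cdot>\<^sub>v v) = \<bar>c\<bar> * vnorm v"
proof -
  have "(c \<cdot>\<^sub>v v) \<bullet> (c \<cdot>\<^sub>v v) = c^2 * (v \<bullet> v)" by (simp add: power2_eq_square)
  then show ?thesis unfolding vnorm_def by (simp add: real_sqrt_mult)
qed

lemma vnorm_nonneg: "vnorm v \<ge> 0" unfolding vnorm_def using dot_self_nonneg by simp

lemma vnorm_sq: "(vnorm v)^2 = v \<bullet> v" unfolding vnorm_def using dot_self_nonneg by simp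

lemma dot_self_zero:
  assumes "v \<in> carrier_vec n" "(v::real vec) \<bullet> v = 0" shows "v = 0\<^sub>v n"
proof (rule eq_vecI)
  have "(\<Sum>i\<in>{0..<n}. v$i * v$i) = 0" using assms dot_sum by metis
  then have "\<forall>i\<in>{0..<n}. v$i * v$i = 0" by (subst sum_nonneg_eq_0_iff[symmetric]) auto
  then show "\<And>i. i < dim_vec (0\<^sub>v n) \<Longrightarrow> v $ i = 0\<^sub>v n $ i" by auto
  show "dim_vec v = dim_vec (0\<^sub>v n)" using assms by auto
qed

lemma mult_zero_vec: "K \<in> carrier_mat r c \<Longrightarrow> K *\<^sub>v 0\<^sub>v c = 0\<^sub>v r"
  by (rule eq_vecI) auto

lemma op_norm_bdd:
  assumes "K \<in> carrier_mat r c"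
  shows "bdd_above {vnorm (K *\<^sub>v v) | v. v \<in> carrier_vec (dim_col K) \<and> vnorm v \<le> 1}"
proof -
  define R where "R = (\<Sum>i\<in>{0..<r}. row K i \<bullet> row K i)"
  have "vnorm (K *\<^sub>v v) \<le> sqrt R" if v: "v \<in> carrier_vec c" "vnorm v \<le> 1" for v
  proof -
    have vv: "v \<bullet> v \<le> 1" using v(2) vnorm_sq[of v] vnorm_nonneg[of v]
      by (metis abs_le_D1 abs_of_nonneg one_power2 power2_le_imp_le sqrt_le_D vnorm_def) 
    have "(K *\<^sub>v v) \<bullet> (K *\<^sub>v v) = (\<Sum>i\<in>{0..<r}. (row K i \<bullet> v) * (row K i \<bullet> v))"
      using assms v by (subst dot_sum[of _ r]) auto
    also have "\<dots> \<le> (\<Sum>i\<in>{0..<r}. (row K i \<bullet> row K i))"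
    proof (rule sum_mono)
      fix i assume "i \<in> {0..<r}"
      have "(row K i \<bullet> v)^2 \<le> (row K i \<bullet> row K i) * (v \<bullet> v)"
        using CS_sq[of "row K i" c v] assms v by auto
      also have "\<dots> \<le> (row K i \<bullet> row K i)" using vv dot_self_nonneg[of "row K i"]
        by (simp add: mult_left_le)
      finally show "(row K i \<bullet> v) * (row K i \<bullet> v) \<le> row K i \<bullet> row K i" by (simp add: power2_eq_square)
    qed
    finally show ?thesis unfolding vnorm_def R_def by (simp add: real_sqrt_le_mono)
  qed
  then show ?thesis using assms unfolding bdd_above_def by auto
qed

lemma op_norm_nonneg:
  assumes "K \<in> carrier_mat r c"
  shows "op_norm K \<ge> 0"
proof -
  have "vnorm (K *\<^sub>v 0\<^sub>v c) \<in> {vnorm (K *\<^sub>v v) | v. v \<in> carrier_vec (dim_col K) \<and> vnorm v \<le> 1}"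
    using assms by (auto simp: vnorm_def)
  then have "vnorm (K *\<^sub>v 0\<^sub>v c) \<le> op_norm K" unfolding op_norm_def
    by (rule cSup_upper[OF _ op_norm_bdd[OF assms]])
  then show ?thesis using vnorm_nonneg order_trans by blast
qed

lemma op_norm_bound:
  assumes "K \<in> carrier_mat r c" "v \<in> carrier_vec c"
  shows "vnorm (K *\<^sub>v v) \<le> op_norm K * vnorm v"
proof (cases "v \<bullet> v = 0")
  case True
  then have "v = 0\<^sub>v c" using dot_self_zero assms by auto
  then show ?thesis using assms by (simp add: vnorm_def mult_zero_vec)
next
  case False
  then have p: "vnorm v > 0" unfolding vnorm_def using dot_self_nonneg[of v] by simp
  define u where "u = (1 / vnorm v) \<cdot>\<^sub>v v"
  have u: "u \<in> carrier_vec c" "vnorm u \<le> 1" unfolding u_def using assms p by (auto simp: vnorm_smult)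
  have "vnorm (K *\<^sub>v u) \<le> op_norm K" unfolding op_norm_def
    by (rule cSup_upper[OF _ op_norm_bdd[OF assms(1)]]) (use u assms in auto)
  moreover have "K *\<^sub>v u = (1 / vnorm v) \<cdot>\<^sub>v (K *\<^sub>v v)" unfolding u_def
    using assms by (simp add: mult_mat_vec)
  ultimately have "vnorm (K *\<^sub>v v) / vnorm v \<le> op_norm K" using p by (simp add: vnorm_smult)
  then show ?thesis using p by (simp add: field_simps)
qed


lemma sym_bil:
  fixes P :: "real mat"
  assumes "P \<in> carrier_mat n n" "transpose_mat P = P" "u \<in> carrier_vec n" "v \<in> carrier_vec n"
  shows "u \<bullet> (P *\<^sub>v v) = v \<bullet> (P *\<^sub>v u)"
proof -
  have "u \<bullet> (P *\<^sub>v v) = (transpose_mat P *\<^sub>v u) \<bullet> v"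
    using transpose_vec_mult_scalar[OF assms(1) assms(4) assms(3)] by simp
  also have "\<dots> = v \<bullet> (P *\<^sub>v u)" using assms by (simp add: comm_scalar_prod[of _ n])
  finally show ?thesis .
qed

lemma quad_expand:
  fixes P :: "real mat"
  assumes "P \<in> carrier_mat n n" "transpose_mat P = P" "u \<in> carrier_vec n" "v \<in> carrier_vec n"
  shows "(u - v) \<bullet> (P *\<^sub>v (u - v)) = u \<bullet> (P *\<^sub>v u) - 2 * (u \<bullet> (P *\<^sub>v v)) + v \<bullet> (P *\<^sub>v v)"
proof -
  have "P *\<^sub>v (u - v) = P *\<^sub>v u - P *\<^sub>v v" using assms by (simp add: mult_minus_distrib_mat_vec)
  then have "(u - v) \<bullet> (P *\<^sub>v (u - v)) = u \<bullet> (P *\<^sub>v u) - u \<bullet> (P *\<^sub>v v) - (v \<bullet> (P *\<^sub>v u) - v \<bullet> (P *\<^sub>v v))"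
    using assms by (simp add: minus_scalar_prod_distrib[of _ n] scalar_prod_minus_distrib[of _ n])
  then show ?thesis using sym_bil[OF assms(1,2,4,3)] by simp
qed

lemma card_less: "J \<subseteq> {..<(n::nat)} \<Longrightarrow> i \<in> J \<Longrightarrow> card {b\<in>J. b < i} < card J"
proof -
  assume a: "J \<subseteq> {..<(n::nat)}" "i \<in> J"
  have "{b \<in> J. b < i} \<subset> J" using a by auto
  then show ?thesis using finite_subset[OF a(1)] by (simp add: psubset_card_mono)
qed

lemma restrict_dot_sub:
  assumes "J \<subseteq> {..<n}" "y \<in> carrier_vec n" "z \<in> coord_subspace n J"
  shows "restrict_vec y J \<bullet> restrict_vec z J = y \<bullet> z"
proof -
  have z: "z \<in> carrier_vec n" using assms(3) unfolding coord_subspace_def by auto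
  have "restrict_vec y J \<bullet> restrict_vec z J = (\<Sum>i\<in>J. y$i * z$i)" by (rule restrict_dot[OF assms(1,2) z])
  also have "\<dots> = (\<Sum>i\<in>{0..<n}. y$i * z$i)"
    by (rule sum_to_S[symmetric], fact, use assms(3) in \<open>auto simp: coord_subspace_def\<close>)
  also have "\<dots> = y \<bullet> z" using z by (simp add: dot_sum)
  finally show ?thesis .
qed

lemma restrict_zero:
  assumes "J \<subseteq> {..<n}" shows "restrict_vec (0\<^sub>v n) J = 0\<^sub>v (card J)"
proof (rule eq_vecI)
  show "dim_vec (restrict_vec (0\<^sub>v n) J) = dim_vec (0\<^sub>v (card J))"
    unfolding restrict_vec_def using card_restr[OF assms] by simp
  fix i assume "i < dim_vec (0\<^sub>v (card J))"
  then have i: "i < card J" by simp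
  then have "pick J i < n" using pick_in_set_le[OF i] assms by auto
  then show "restrict_vec (0\<^sub>v n) J $ i = 0\<^sub>v (card J) $ i"
    unfolding restrict_vec_def using card_restr[OF assms] i by simp
qed

lemma M_zero:
  assumes "sym_psd n M" "mat_range M = coord_subspace n J" "i < n" "j < n" "i \<notin> J \<or> j \<notin> J"
  shows "M $$ (i,j) = 0"
proof -
  have Mc: "M \<in> carrier_mat n n" and MT: "transpose_mat M = M" using assms(1) unfolding sym_psd_def by auto
  have col: "M $$ (a,b) = 0" if "a < n" "b < n" "a \<notin> J" for a b
  proof -
    have "M *\<^sub>v unit_vec n b \<in> mat_range M" unfolding mat_range_def using Mc by auto
    then have "(M *\<^sub>v unit_vec n b) $ a = 0" using assms(2) that unfolding coord_subspace_def by auto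
    moreover have "(M *\<^sub>v unit_vec n b) $ a = M $$ (a,b)" using Mc that by simp
    ultimately show ?thesis by simp
  qed
  show ?thesis
  proof (cases "i \<notin> J")
    case True then show ?thesis using col assms by auto
  next
    case False
    then have "j \<notin> J" using assms by auto
    then have "M $$ (j,i) = 0" using col assms by auto
    moreover have "transpose_mat M $$ (i,j) = M $$ (j,i)" using Mc assms by simp
    ultimately show ?thesis using MT by simp
  qed
qed


lemma M_ext:
  assumes "sym_psd n M" "mat_range M = coord_subspace n J" "J \<subseteq> {..<n}"
    and a: "a \<in> carrier_vec (card J)"
  shows "M *\<^sub>v extv n J a = extv n J (submatrix M J J *\<^sub>v a)"
proof (rule eq_vecI)
  have Mc: "M \<in> carrier_mat n n" using assms(1) unfolding sym_psd_def by auto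
  have Ad: "dim_row (submatrix M J J) = card J" "dim_col (submatrix M J J) = card J"
    unfolding submatrix_def using Mc card_restr[OF assms(3)] by auto
  show "dim_vec (M *\<^sub>v extv n J a) = dim_vec (extv n J (submatrix M J J *\<^sub>v a))"
    using Mc by (simp add: extv_def)
  fix i assume "i < dim_vec (extv n J (submatrix M J J *\<^sub>v a))"
  then have i: "i < n" by (simp add: extv_def)
  have "(M *\<^sub>v extv n J a) $ i = row M i \<bullet> extv n J a" using Mc i by simp
  also have "\<dots> = (\<Sum>j\<in>{0..<n}. M $$ (i,j) * extv n J a $ j)"
    using Mc i by (subst dot_sum[of _ n]) auto
  also have "\<dots> = (\<Sum>j\<in>J. M $$ (i,j) * extv n J a $ j)"
    by (rule sum_to_S[OF assms(3)]) (simp add: extv_def)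
  also have "\<dots> = (\<Sum>k\<in>{0..<card J}. M $$ (i,pick J k) * extv n J a $ pick J k)"
    by (rule sum_pick[OF assms(3), symmetric])
  also have "\<dots> = (\<Sum>k\<in>{0..<card J}. M $$ (i,pick J k) * a $ k)"
  proof (rule sum.cong[OF refl])
    fix k assume "k \<in> {0..<card J}"
    then have k: "k < card J" by simp
    have "pick J k \<in> J" by (rule pick_in_set_le[OF k])
    then have "pick J k < n" using assms(3) by auto
    then show "M $$ (i,pick J k) * extv n J a $ pick J k = M $$ (i,pick J k) * a $ k"
      unfolding extv_def using \<open>pick J k \<in> J\<close> card_pick_le[OF k] by simp
  qed
  also have "\<dots> = extv n J (submatrix M J J *\<^sub>v a) $ i"
  proof (cases "i \<in> J")
    case True
    define c where "c = card {b\<in>J. b < i}"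
    have c: "c < card J" unfolding c_def by (rule card_less[OF assms(3) True])
    have pc: "pick J c = i" unfolding c_def by (rule pick_card_in_set[OF True])
    have "extv n J (submatrix M J J *\<^sub>v a) $ i = (submatrix M J J *\<^sub>v a) $ c"
      unfolding extv_def c_def using i True by simp
    also have "\<dots> = row (submatrix M J J) c \<bullet> a" using Ad c by simp
    also have "\<dots> = (\<Sum>k\<in>{0..<card J}. submatrix M J J $$ (c,k) * a $ k)"
      using Ad c a by (subst dot_sum[of _ "card J"]) auto
    also have "\<dots> = (\<Sum>k\<in>{0..<card J}. M $$ (i,pick J k) * a $ k)"
    proof (rule sum.cong[OF refl])
      fix k assume "k \<in> {0..<card J}"
      then have "submatrix M J J $$ (c,k) = M $$ (pick J c, pick J k)"
        using c Ad Mc card_restr[OF assms(3)] by (intro submatrix_index) auto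
      then show "submatrix M J J $$ (c,k) * a $ k = M $$ (i,pick J k) * a $ k" using pc by simp
    qed
    finally show ?thesis by simp
  next
    case False
    have "M $$ (i,pick J k) = 0" if "k \<in> {0..<card J}" for k
    proof -
      have "pick J k \<in> J" using pick_in_set_le that by auto
      then have "pick J k < n" using assms(3) by auto
      then show ?thesis using M_zero[OF assms(1,2) i] False by auto
    qed
    then show ?thesis using False i by (simp add: extv_def)
  qed
  finally show "(M *\<^sub>v extv n J a) $ i = extv n J (submatrix M J J *\<^sub>v a) $ i" .
qed


theorem lemmaE8:
  fixes l :: nat and M Xi :: "real mat" and J :: "nat set"
  assumes "sym_psd l M" and "sym_psd l Xi"
    and "J \<subseteq> {..<l}"
    and "mat_range M = coord_subspace l J"
    and "op_norm Xi \<le> lambda_min (submatrix M J J) / 2"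
    and "invertible_mat (M + Xi)"
  shows "(\<forall>x \<in> mat_range M.
            \<bar>x \<bullet> (mat_inv (M + Xi) *\<^sub>v x)
              - restrict_vec x J \<bullet> (mat_inv (submatrix M J J) *\<^sub>v restrict_vec x J)\<bar>
            \<le> 2 * (op_norm (mat_inv (submatrix M J J)))\<^sup>2 * op_norm Xi * (vnorm x)\<^sup>2)
       \<and> (\<forall>x \<in> carrier_vec l. x \<notin> mat_range M \<longrightarrow>
            x \<bullet> (mat_inv (M + Xi) *\<^sub>v x)
              \<ge> 1 / (2 * op_norm Xi) * (vnorm (restrict_vec x ({..<l} - J)))\<^sup>2)"
proof -
  note J = assms(3)
  have Mc: "M \<in> carrier_mat l l" and MT: "transpose_mat M = M"
    and Mp: "\<And>v. v \<in> carrier_vec l \<Longrightarrow> 0 \<le> v \<bullet> (M *\<^sub>v v)"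
    using assms(1) unfolding sym_psd_def by auto
  have Xc: "Xi \<in> carrier_mat l l" and XT: "transpose_mat Xi = Xi"
    and Xp: "\<And>v. v \<in> carrier_vec l \<Longrightarrow> 0 \<le> v \<bullet> (Xi *\<^sub>v v)"
    using assms(2) unfolding sym_psd_def by auto
  define B where "B = M + Xi"
  have Bc: "B \<in> carrier_mat l l" unfolding B_def using Mc Xc by simp
  have BT: "transpose_mat B = B" unfolding B_def using Mc Xc MT XT by (simp add: transpose_add)
  have Bv: "B *\<^sub>v v = M *\<^sub>v v + Xi *\<^sub>v v" if "v \<in> carrier_vec l" for v
    unfolding B_def using Mc Xc that by (simp add: add_mult_distrib_mat_vec)
  have Bq: "u \<bullet> (B *\<^sub>v v) = u \<bullet> (M *\<^sub>v v) + u \<bullet> (Xi *\<^sub>v v)" if "u \<in> carrier_vec l" "v \<in> carrier_vec l" for u v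
    using Bv[OF that(2)] that Mc Xc by (simp add: scalar_prod_add_distrib[of _ l])
  have Bp: "0 \<le> v \<bullet> (B *\<^sub>v v)" if "v \<in> carrier_vec l" for v
    using Bq[OF that that] Mp[OF that] Xp[OF that] by simp
  define c where "c = op_norm Xi"
  have c0: "c \<ge> 0" unfolding c_def by (rule op_norm_nonneg[OF Xc])
  have Xb: "v \<bullet> (Xi *\<^sub>v v) \<le> c * (v \<bullet> v)" if "v \<in> carrier_vec l" for v
  proof -
    have "v \<bullet> (Xi *\<^sub>v v) \<le> vnorm v * vnorm (Xi *\<^sub>v v)" using CS[of v l "Xi *\<^sub>v v"] that Xc by auto
    also have "\<dots> \<le> vnorm v * (c * vnorm v)" unfolding c_def
      by (rule mult_left_mono[OF op_norm_bound[OF Xc that] vnorm_nonneg])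
    also have "\<dots> = c * (v \<bullet> v)" using vnorm_sq[of v] by (simp add: power2_eq_square)
    finally show ?thesis .
  qed
  have exG: "\<exists>G. G \<in> carrier_mat l l \<and> B * G = 1\<^sub>m l \<and> G * B = 1\<^sub>m l"
  proof -
    obtain G where G: "inverts_mat B G" "inverts_mat G B" using assms(6) unfolding invertible_mat_def B_def by auto
    have 1: "B * G = 1\<^sub>m l" using G(1) Bc unfolding inverts_mat_def by simp
    have "dim_col G = l" using arg_cong[OF 1, of dim_col] by simp
    moreover have "dim_row G = l" using G(2) Bc unfolding inverts_mat_def
      by (metis index_mult_mat(3) index_one_mat(3) carrier_matD(2))
    ultimately show ?thesis using 1 G(2) unfolding inverts_mat_def by auto
  qed
  define G where "G = mat_inv B"
  have G: "G \<in> carrier_mat l l \<and> B * G = 1\<^sub>m l \<and> G * B = 1\<^sub>m l"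
    unfolding G_def mat_inv_def using someI_ex[OF exG] Bc by simp
  have Gc: "G \<in> carrier_mat l l" and BG: "B * G = 1\<^sub>m l" and GB: "G * B = 1\<^sub>m l" using G by auto
  have BGv: "B *\<^sub>v (G *\<^sub>v v) = v" if "v \<in> carrier_vec l" for v
    using assoc_mult_mat_vec[OF Bc Gc that, symmetric] BG that by simp
  have GBv: "G *\<^sub>v (B *\<^sub>v v) = v" if "v \<in> carrier_vec l" for v
    using assoc_mult_mat_vec[OF Gc Bc that, symmetric] GB that by simp
  define K where "K = card J"
  define A where "A = submatrix M J J"
  have Ac: "A \<in> carrier_mat K K" unfolding A_def K_def submatrix_def
    using Mc card_restr[OF J] by auto
  have dA: "det A \<noteq> 0"
  proof
    assume "det A = 0"
    then obtain a where a: "a \<in> carrier_vec K" "a \<noteq> 0\<^sub>v K" "A *\<^sub>v a = 0\<^sub>v K"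
      using det_0_iff_vec_prod_zero_field[OF Ac] by auto
    define z where "z = extv l J a"
    have "M *\<^sub>v z = extv l J (0\<^sub>v K)" unfolding z_def
      using M_ext[OF assms(1,4) J, of a] a unfolding A_def K_def by simp
    also have "\<dots> = 0\<^sub>v l"
      by (rule eq_vecI) (auto simp: extv_def K_def card_less[OF J])
    finally have Mz: "M *\<^sub>v z = 0\<^sub>v l" .
    have "z \<in> mat_range M" using extv_sub assms(4) unfolding z_def by auto
    then obtain y where y: "y \<in> carrier_vec l" "z = M *\<^sub>v y" unfolding mat_range_def using Mc by auto
    have "z \<bullet> z = y \<bullet> (M *\<^sub>v z)" using sym_bil[OF Mc MT, of z y] y by (simp add: z_def)
    then have "z \<bullet> z = 0" using Mz y by simp
    then have "z = 0\<^sub>v l" using dot_self_zero[of z l] by (simp add: z_def)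
    then have "a = restrict_vec (0\<^sub>v l) J" using restrict_extv[OF J, of a] a unfolding z_def K_def by simp
    then show False using restrict_zero[OF J] a unfolding K_def by simp
  qed
  have "A \<in> Units (ring_mat TYPE(real) K ())" by (rule det_non_zero_imp_unit[OF Ac dA])
  then have exA: "\<exists>Ai. Ai \<in> carrier_mat K K \<and> A * Ai = 1\<^sub>m K \<and> Ai * A = 1\<^sub>m K"
    unfolding Units_def ring_mat_def by auto
  define Ai where "Ai = mat_inv A"
  have Ai: "Ai \<in> carrier_mat K K \<and> A * Ai = 1\<^sub>m K \<and> Ai * A = 1\<^sub>m K"
    unfolding Ai_def mat_inv_def using someI_ex[OF exA] Ac by simp
  have Aic: "Ai \<in> carrier_mat K K" and AAi: "A * Ai = 1\<^sub>m K" using Ai by auto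
  define oA where "oA = op_norm Ai"
  have oA0: "oA \<ge> 0" unfolding oA_def by (rule op_norm_nonneg[OF Aic])
  have part1: "\<bar>x \<bullet> (G *\<^sub>v x) - restrict_vec x J \<bullet> (Ai *\<^sub>v restrict_vec x J)\<bar>
            \<le> 2 * oA\<^sup>2 * c * (vnorm x)\<^sup>2" if "x \<in> mat_range M" for x
  proof -
    have xs: "x \<in> coord_subspace l J" using that assms(4) by simp
    then have xc: "x \<in> carrier_vec l" unfolding coord_subspace_def by auto
    define r where "r = restrict_vec x J"
    have rc: "r \<in> carrier_vec K" unfolding r_def K_def by (rule dim_restrict[OF J xc])
    define a where "a = Ai *\<^sub>v r"
    have ac: "a \<in> carrier_vec K" unfolding a_def using Aic rc by simp
    define z where "z = extv l J a"
    have zc: "z \<in> carrier_vec l" unfolding z_def by simp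
    have zs: "z \<in> coord_subspace l J" unfolding z_def by (rule extv_sub)
    have "M *\<^sub>v z = extv l J (A *\<^sub>v a)" unfolding z_def A_def
      using M_ext[OF assms(1,4) J] ac unfolding K_def by simp
    also have "A *\<^sub>v a = r" unfolding a_def
      using assoc_mult_mat_vec[OF Ac Aic rc, symmetric] AAi rc by simp
    also have "extv l J r = x" unfolding r_def by (rule extv_restrict[OF J xs])
    finally have Mz: "M *\<^sub>v z = x" .
    define w where "w = G *\<^sub>v x"
    have wc: "w \<in> carrier_vec l" unfolding w_def using Gc xc by simp
    have Bw: "B *\<^sub>v w = x" unfolding w_def by (rule BGv[OF xc])
    have ra: "r \<bullet> a = x \<bullet> z"
    proof -
      have "restrict_vec z J = a" unfolding z_def using restrict_extv[OF J] ac unfolding K_def by simp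
      then show ?thesis using restrict_dot_sub[OF J xc zs] unfolding r_def by simp
    qed
    have aa: "a \<bullet> a = z \<bullet> z"
    proof -
      have "restrict_vec z J = a" unfolding z_def using restrict_extv[OF J] ac unfolding K_def by simp
      then show ?thesis using restrict_dot_sub[OF J zc zs] by simp
    qed
    have rr: "r \<bullet> r = x \<bullet> x" using restrict_dot_sub[OF J xc xs] unfolding r_def by simp
    have s1: "z \<bullet> (M *\<^sub>v z) = x \<bullet> z" using Mz comm_scalar_prod[OF zc xc] by simp
    have s2: "z \<bullet> (M *\<^sub>v w) = x \<bullet> w"
      using sym_bil[OF Mc MT zc wc] Mz comm_scalar_prod[OF wc xc] by simp
    have s3: "x \<bullet> w = w \<bullet> (M *\<^sub>v w) + w \<bullet> (Xi *\<^sub>v w)"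
      using Bq[OF wc wc] Bw comm_scalar_prod[OF wc xc] by simp
    have s4: "x \<bullet> z = z \<bullet> (M *\<^sub>v w) + z \<bullet> (Xi *\<^sub>v w)"
      using Bq[OF zc wc] Bw comm_scalar_prod[OF zc xc] by simp
    have s5: "w \<bullet> (Xi *\<^sub>v z) = z \<bullet> (Xi *\<^sub>v w)" using sym_bil[OF Xc XT wc zc] .
    have pM: "0 \<le> z \<bullet> (M *\<^sub>v z) - 2 * (z \<bullet> (M *\<^sub>v w)) + w \<bullet> (M *\<^sub>v w)"
      using Mp[of "z - w"] quad_expand[OF Mc MT zc wc] zc wc by simp
    have pX: "0 \<le> z \<bullet> (Xi *\<^sub>v z) - 2 * (z \<bullet> (Xi *\<^sub>v w)) + w \<bullet> (Xi *\<^sub>v w)"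
      using Xp[of "z - w"] quad_expand[OF Xc XT zc wc] zc wc by simp
    have wX: "0 \<le> w \<bullet> (Xi *\<^sub>v w)" using Xp[OF wc] .
    define D where "D = x \<bullet> z - x \<bullet> w"
    have D1: "D \<ge> 0" and D2: "D \<le> z \<bullet> (Xi *\<^sub>v z)"
      using pM pX wX s1 s2 s3 s4 unfolding D_def by linarith+
    have "z \<bullet> (Xi *\<^sub>v z) \<le> c * (z \<bullet> z)" by (rule Xb[OF zc])
    also have "z \<bullet> z = (vnorm a)^2" using aa vnorm_sq[of a] by simp
    also have "vnorm r = vnorm x" unfolding vnorm_def using rr by simp
    have "vnorm a \<le> oA * vnorm x" unfolding a_def oA_def
      using op_norm_bound[OF Aic rc] \<open>vnorm r = vnorm x\<close> by simp
    then have "(vnorm a)^2 \<le> (oA * vnorm x)^2" using vnorm_nonneg[of a] by (rule power_mono)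
    then have "c * (vnorm a)^2 \<le> c * (oA * vnorm x)^2" using c0 by (rule mult_left_mono)
    finally have "D \<le> c * (oA * vnorm x)^2" using D2 by linarith
    moreover have "0 \<le> c * (oA * vnorm x)^2" using c0 by simp
    ultimately have "D \<le> 2 * (c * (oA\<^sup>2 * (vnorm x)\<^sup>2))" by (simp add: power_mult_distrib)
    then have "D \<le> 2 * oA\<^sup>2 * c * (vnorm x)\<^sup>2" by (simp add: ac_simps)
    moreover have "x \<bullet> (G *\<^sub>v x) - restrict_vec x J \<bullet> (Ai *\<^sub>v restrict_vec x J) = - D"
      unfolding D_def w_def[symmetric] r_def[symmetric] a_def[symmetric] ra by simp
    ultimately show ?thesis using D1 by simp
  qed
  have var: "2 * (x \<bullet> y) - y \<bullet> (B *\<^sub>v y) \<le> x \<bullet> (G *\<^sub>v x)"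
    if xc: "x \<in> carrier_vec l" and yc: "y \<in> carrier_vec l" for x y
  proof -
    define t where "t = x - B *\<^sub>v y"
    have tc: "t \<in> carrier_vec l" unfolding t_def using xc yc Bc by simp
    have Gtc: "G *\<^sub>v t \<in> carrier_vec l" using Gc tc by simp
    have "t \<bullet> (G *\<^sub>v t) = (B *\<^sub>v (G *\<^sub>v t)) \<bullet> (G *\<^sub>v t)" using BGv[OF tc] by simp
    also have "\<dots> = (G *\<^sub>v t) \<bullet> (B *\<^sub>v (G *\<^sub>v t))" using Bc Gtc by (simp add: comm_scalar_prod[of _ l])
    finally have t0: "0 \<le> t \<bullet> (G *\<^sub>v t)" using Bp[OF Gtc] by simp
    have Byc: "B *\<^sub>v y \<in> carrier_vec l" using Bc yc by simp
    have Gxc: "G *\<^sub>v x \<in> carrier_vec l" using Gc xc by simp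
    have "G *\<^sub>v t = G *\<^sub>v x - y" unfolding t_def using Gc xc Byc GBv[OF yc]
      by (simp add: mult_minus_distrib_mat_vec)
    then have "t \<bullet> (G *\<^sub>v t) = x \<bullet> (G *\<^sub>v x) - x \<bullet> y - ((B *\<^sub>v y) \<bullet> (G *\<^sub>v x) - (B *\<^sub>v y) \<bullet> y)"
      unfolding t_def using xc yc Byc Gxc
      by (simp add: minus_scalar_prod_distrib[of _ l] scalar_prod_minus_distrib[of _ l])
    moreover have "(B *\<^sub>v y) \<bullet> (G *\<^sub>v x) = x \<bullet> y"
    proof -
      have "(B *\<^sub>v y) \<bullet> (G *\<^sub>v x) = (G *\<^sub>v x) \<bullet> (B *\<^sub>v y)" using Byc Gxc by (simp add: comm_scalar_prod[of _ l])
      also have "\<dots> = y \<bullet> (B *\<^sub>v (G *\<^sub>v x))" using sym_bil[OF Bc BT Gxc yc] .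
      also have "\<dots> = x \<bullet> y" using BGv[OF xc] comm_scalar_prod[OF yc xc] by simp
      finally show ?thesis .
    qed
    moreover have "(B *\<^sub>v y) \<bullet> y = y \<bullet> (B *\<^sub>v y)" using Byc yc by (simp add: comm_scalar_prod[of _ l])
    ultimately show ?thesis using t0 by linarith
  qed
  have part2: "x \<bullet> (G *\<^sub>v x) \<ge> 1 / (2 * c) * (vnorm (restrict_vec x ({..<l} - J)))\<^sup>2"
    if xc: "x \<in> carrier_vec l" for x
  proof -
    define S where "S = {..<l} - J"
    have S: "S \<subseteq> {..<l}" unfolding S_def by auto
    define q where "q = vec l (\<lambda>i. if i \<in> J then 0 else x $ i)"
    have qc: "q \<in> carrier_vec l" unfolding q_def by simp
    define s where "s = (\<Sum>i\<in>S. x$i * x$i)"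
    have s0: "s \<ge> 0" unfolding s_def by (intro sum_nonneg) auto
    have vs: "(vnorm (restrict_vec x S))^2 = s" unfolding s_def
      using vnorm_sq restrict_dot[OF S xc xc] by simp
    have qq: "q \<bullet> q = s"
    proof -
      have "q \<bullet> q = (\<Sum>i\<in>{0..<l}. q$i * q$i)" by (rule dot_sum[OF qc])
      also have "\<dots> = (\<Sum>i\<in>S. q$i * q$i)" by (rule sum_to_S[OF S]) (auto simp: q_def S_def)
      also have "\<dots> = s" unfolding s_def by (rule sum.cong) (auto simp: q_def S_def)
      finally show ?thesis .
    qed
    have xq: "x \<bullet> q = s"
    proof -
      have "x \<bullet> q = (\<Sum>i\<in>{0..<l}. x$i * q$i)" by (rule dot_sum[OF qc])
      also have "\<dots> = (\<Sum>i\<in>S. x$i * q$i)" by (rule sum_to_S[OF S]) (auto simp: q_def S_def)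
      also have "\<dots> = s" unfolding s_def by (rule sum.cong) (auto simp: q_def S_def)
      finally show ?thesis .
    qed
    have Mq: "M *\<^sub>v q = 0\<^sub>v l"
    proof (rule eq_vecI)
      show "dim_vec (M *\<^sub>v q) = dim_vec (0\<^sub>v l)" using Mc by simp
      fix i assume "i < dim_vec (0\<^sub>v l)"
      then have i: "i < l" by simp
      have "(M *\<^sub>v q) $ i = (\<Sum>j\<in>{0..<l}. M $$ (i,j) * q $ j)" using Mc i qc
        by (simp add: dot_sum[of _ l])
      also have "\<dots> = 0"
      proof (rule sum.neutral, rule ballI)
        fix j assume "j \<in> {0..<l}"
        then show "M $$ (i,j) * q $ j = 0" using M_zero[OF assms(1,4) i, of j] by (auto simp: q_def)
      qed
      finally show "(M *\<^sub>v q) $ i = 0\<^sub>v l $ i" using i by simp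
    qed
    have qB: "q \<bullet> (B *\<^sub>v q) \<le> c * s"
      using Bq[OF qc qc] Mq qc Xb[OF qc] qq by simp
    show ?thesis
    proof (cases "c = 0")
      case True
      have "2 * (x \<bullet> 0\<^sub>v l) - 0\<^sub>v l \<bullet> (B *\<^sub>v 0\<^sub>v l) \<le> x \<bullet> (G *\<^sub>v x)" by (rule var[OF xc zero_carrier_vec])
      then show ?thesis using True xc Bc by (simp add: mult_zero_vec)
    next
      case False
      then have cp: "c > 0" using c0 by simp
      define y where "y = (1/c) \<cdot>\<^sub>v q"
      have yc: "y \<in> carrier_vec l" unfolding y_def using qc by simp
      have "B *\<^sub>v y = (1/c) \<cdot>\<^sub>v (B *\<^sub>v q)" unfolding y_def using Bc qc by (simp add: mult_mat_vec)
      then have "y \<bullet> (B *\<^sub>v y) = (1/c) * (1/c) * (q \<bullet> (B *\<^sub>v q))" unfolding y_def using Bc qc by simp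
      also have "\<dots> \<le> (1/c) * (1/c) * (c * s)" using qB cp by (intro mult_left_mono) auto
      also have "\<dots> = s / c" using cp by (simp add: field_simps)
      finally have yB: "y \<bullet> (B *\<^sub>v y) \<le> s / c" .
      have xy: "x \<bullet> y = s / c" unfolding y_def using xc qc xq by simp
      have "s / c \<le> x \<bullet> (G *\<^sub>v x)" using var[OF xc yc] yB xy by simp
      moreover have "1 / (2 * c) * s \<le> s / c" using cp s0 by (simp add: field_simps)
      ultimately show ?thesis using vs unfolding S_def by simp
    qed
  qed
  show ?thesis using part1 part2 unfolding G_def B_def Ai_def A_def oA_def c_def by auto
qed

end
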